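(* For all integers $n,k,p$ with $n\ge 9$, $3\le k\le n/3$ and $p\ge\max\{k-1,\lceil n/(k-1)\rceil\}$, there exists a feasible homogeneous PV graph $\vec G_R$ with $n$ sites, $k$ carriers and period $p$ such that $$\mathcal M(\vec G_R)\ \ge\ (k-2)(p+1)+\left\lfloor \frac{n}{k-1}\right\rfloor .$$ (This holds even though the agent knows $\vec G_R$, $k$, $p$ and has unlimited memory.)
   Context: A PV (periodically varying) system consists of a finite set $S$ of $n$ sites and a set $C$ of $k\le n$ carriers. Each carrier $c$ has a route $\pi(c)=\langle x_0,\dots,x_{p(c)-1}\rangle$, a finite sequence of sites (repetitions allowed) of length $p(c)\ge1$ called its period; $\pi(c)[j]=x_{j\bmod p(c)}$. At each time $t\in\mathbb N$ carrier $c$ is at $\pi(c)[t]$ and moves to $\pi(c)[t+1]$. The PV graph $\vec G_R$ is the directed edge-labelled multigraph on $S$ with edges $(x_i,x_{i+1},i)$, $0\le i<p(c)$, for every carrier. The period of the system is $p=\max_c p(c)$; the system is homogeneous if all $p(c)$ are equal, heterogeneous otherwise. An exploring agent is injected at time $0$ at a site of $\mathrm{start}(\vec G_R)=\{\pi(c)[0]:c\in C\}$; if at time $t$ it is at site $x$ it must either ride one step with some carrier $c$ with $\pi(c)[t]=x$ (one move, to $\pi(c)[t+1]$) or halt; it cannot wait. A walk is a concrete cover if it visits every site. A strategy solves PVG-Exploration of $\vec G_R$ if from every injection site the agent visits all sites and halts in finite time. $\vec G_R$ is feasible if from the starting point of every carrier some realizable walk is a concrete cover. For feasible $\vec G_R$,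 $\mathcal M(\vec G_R)$ denotes the minimum, over all deterministic strategies solving PVG-Exploration of $\vec G_R$ (which may use full knowledge of $\vec G_R$ and unlimited memory), of the maximum over injection sites of the number of moves performed. *)

theory Defs
  imports Main "HOL-Library.Discrete_Functions" Complex_Main
begin

definition pv_wf :: "nat set \<Rightarrow> nat \<Rightarrow> (nat \<Rightarrow> nat list) \<Rightarrow> bool" where
  "pv_wf S k R \<longleftrightarrow> finite S \<and> (\<forall>c<k. R c \<noteq> [] \<and> set (R c) \<subseteq> S)"

definition pv_pos :: "(nat \<Rightarrow> nat list) \<Rightarrow> nat \<Rightarrow> nat \<Rightarrow> nat" where
  "pv_pos R c t = R c ! (t mod length (R c))"

definition pv_period :: "nat \<Rightarrow> (nat \<Rightarrow> nat list) \<Rightarrow> nat" where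
  "pv_period k R = Max ((\<lambda>c. length (R c)) ` {..<k})"

definition pv_homogeneous :: "nat \<Rightarrow> (nat \<Rightarrow> nat list) \<Rightarrow> bool" where
  "pv_homogeneous k R \<longleftrightarrow> (\<forall>c<k. \<forall>d<k. length (R c) = length (R d))"

definition pv_start :: "nat \<Rightarrow> (nat \<Rightarrow> nat list) \<Rightarrow> nat set" where
  "pv_start k R = {pv_pos R c 0 | c. c < k}"

text \<open>Sites visited by the agent injected at x0 at time 0 that rides carrier cs!j
  at time j (j-th move); the j-th entry is the site at time j.\<close>
definition walk_sites :: "(nat \<Rightarrow> nat list) \<Rightarrow> nat \<Rightarrow> nat list \<Rightarrow> nat list" where
  "walk_sites R x0 cs = x0 # map (\<lambda>j. pv_pos R (cs ! j) (Suc j)) [0..<length cs]"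

definition realizable_walk :: "nat \<Rightarrow> (nat \<Rightarrow> nat list) \<Rightarrow> nat \<Rightarrow> nat list \<Rightarrow> bool" where
  "realizable_walk k R x0 cs \<longleftrightarrow>
     (\<forall>j<length cs. cs ! j < k \<and> pv_pos R (cs ! j) j = walk_sites R x0 cs ! j)"

definition concrete_cover :: "nat set \<Rightarrow> (nat \<Rightarrow> nat list) \<Rightarrow> nat \<Rightarrow> nat list \<Rightarrow> bool" where
  "concrete_cover S R x0 cs \<longleftrightarrow> S \<subseteq> set (walk_sites R x0 cs)"

definition pv_feasible :: "nat set \<Rightarrow> nat \<Rightarrow> (nat \<Rightarrow> nat list) \<Rightarrow> bool" where
  "pv_feasible S k R \<longleftrightarrow>
     (\<forall>c<k. \<exists>cs. realizable_walk k R (pv_pos R c 0) cs \<and> concrete_cover S R (pv_pos R c 0) cs)"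

text \<open>A deterministic strategy maps the history of visited sites (injection site first,
  current site last; the current time is its length minus one) to Some c (ride carrier c)
  or None (halt). It may depend arbitrarily on the fixed PV graph (it is chosen after it).\<close>
definition strategy_run ::
  "nat \<Rightarrow> (nat \<Rightarrow> nat list) \<Rightarrow> (nat list \<Rightarrow> nat option) \<Rightarrow> nat \<Rightarrow> nat list \<Rightarrow> bool" where
  "strategy_run k R \<sigma> x0 cs \<longleftrightarrow>
     realizable_walk k R x0 cs \<and>
     (\<forall>j<length cs. \<sigma> (take (Suc j) (walk_sites R x0 cs)) = Some (cs ! j)) \<and>
     \<sigma> (walk_sites R x0 cs) = None"

definition solves_exploration ::
  "nat set \<Rightarrow> nat \<Rightarrow> (nat \<Rightarrow> nat list) \<Rightarrow> (nat list \<Rightarrow> nat option) \<Rightarrow> bool" where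
  "solves_exploration S k R \<sigma> \<longleftrightarrow>
     (\<forall>x0 \<in> pv_start k R. \<exists>cs. strategy_run k R \<sigma> x0 cs \<and> concrete_cover S R x0 cs)"

definition pv_M :: "nat set \<Rightarrow> nat \<Rightarrow> (nat \<Rightarrow> nat list) \<Rightarrow> nat" where
  "pv_M S k R = (LEAST m. \<exists>\<sigma>. solves_exploration S k R \<sigma> \<and>
      (\<forall>x0 \<in> pv_start k R. \<forall>cs. strategy_run k R \<sigma> x0 cs \<longrightarrow> length cs \<le> m))"

end

theory Submission
  imports Defs
begin


lemma exists_dist:
  fixes K :: nat and lo hi :: "nat \<Rightarrow> nat"
  shows
  "(\<forall>i<K. lo i \<le> hi i) \<Longrightarrow> (\<Sum>i<K. lo i) \<le> N \<Longrightarrow> N \<le> (\<Sum>i<K. hi i) \<Longrightarrow>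
   \<exists>f. (\<forall>i<K. lo i \<le> f i \<and> f i \<le> hi i) \<and> (\<Sum>i<K. f i) = (N::nat)"
proof (induction K arbitrary: N)
  case 0 then show ?case by simp
next
  case (Suc K)
  define x where "x = min (hi K) (N - (\<Sum>i<K. lo i))"
  have x1: "lo K \<le> x" "x \<le> hi K" using Suc.prems by (auto simp: x_def)
  have slh: "(\<Sum>i<K. lo i) \<le> (\<Sum>i<K. hi i)"
    using Suc.prems(1) by (intro sum_mono) auto
  have "(\<Sum>i<K. lo i) \<le> N - x" "N - x \<le> (\<Sum>i<K. hi i)"
    using Suc.prems slh by (auto simp: x_def min_def)
  then obtain f where f: "\<forall>i<K. lo i \<le> f i \<and> f i \<le> hi i" "(\<Sum>i<K. f i) = N - x"
    using Suc.IH Suc.prems(1) by (meson less_SucI)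
  have xN: "x \<le> N" using Suc.prems by (auto simp: x_def min_def)
  have A: "\<forall>i<Suc K. lo i \<le> (f(K := x)) i \<and> (f(K := x)) i \<le> hi i"
  proof (intro allI impI)
    fix i assume "i < Suc K"
    then consider "i < K" | "i = K" by linarith
    thus "lo i \<le> (f(K := x)) i \<and> (f(K := x)) i \<le> hi i"
      by cases (use f x1 in auto)
  qed
  have "(\<Sum>i<Suc K. (f(K := x)) i) = (\<Sum>i<K. f i) + x"
    by (simp add: lessThan_Suc)
  hence "(\<Sum>i<Suc K. (f(K := x)) i) = N" using f xN by simp
  with A show ?case by blast
qed




lemma ws_len[simp]: "length (walk_sites R x0 cs) = Suc (length cs)"
  by (simp add: walk_sites_def)
lemma ws_0[simp]: "walk_sites R x0 cs ! 0 = x0"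
  by (simp add: walk_sites_def)
lemma ws_Suc: "j < length cs \<Longrightarrow> walk_sites R x0 cs ! Suc j = pv_pos R (cs!j) (Suc j)"
  by (simp add: walk_sites_def)
lemma ws_hd_take: "hd (take (Suc j) (walk_sites R x0 cs)) = x0"
  by (simp add: walk_sites_def)

lemma exists_strategy:
  assumes fin: "finite (pv_start k R)"
    and ex: "\<forall>x0\<in>pv_start k R. \<exists>cs. realizable_walk k R x0 cs \<and> concrete_cover S R x0 cs"
  shows "\<exists>m \<sigma>. solves_exploration S k R \<sigma> \<and>
      (\<forall>x0 \<in> pv_start k R. \<forall>cs. strategy_run k R \<sigma> x0 cs \<longrightarrow> length cs \<le> m)"
proof -
  define W where "W x0 = (SOME cs. realizable_walk k R x0 cs \<and> concrete_cover S R x0 cs)" for x0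
  have W: "realizable_walk k R x0 (W x0) \<and> concrete_cover S R x0 (W x0)" if "x0 \<in> pv_start k R" for x0
    unfolding W_def using ex that by (metis (mono_tags, lifting) someI_ex)
  define \<sigma> where "\<sigma> h = (if h \<noteq> [] \<and> length h \<le> length (W (hd h)) \<and>
       h = take (length h) (walk_sites R (hd h) (W (hd h))) then Some (W (hd h) ! (length h - 1)) else None)" for h
  define M where "M = Max ((\<lambda>x. length (W x)) ` pv_start k R)"
  have run: "strategy_run k R \<sigma> x0 (W x0)" if "x0 \<in> pv_start k R" for x0
  proof -
    have "\<sigma> (take (Suc j) (walk_sites R x0 (W x0))) = Some (W x0 ! j)" if "j < length (W x0)" for j
    proof -
      have h: "hd (take (Suc j) (walk_sites R x0 (W x0))) = x0" by (rule ws_hd_take)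
      have l: "length (take (Suc j) (walk_sites R x0 (W x0))) = Suc j" using that by simp
      show ?thesis unfolding \<sigma>_def h l using that by (auto simp: walk_sites_def)
    qed
    moreover have "\<sigma> (walk_sites R x0 (W x0)) = None"
      unfolding \<sigma>_def by (simp add: walk_sites_def)
    ultimately show ?thesis using W[OF that] unfolding strategy_run_def by auto
  qed
  have bound: "length cs \<le> M" if "x0 \<in> pv_start k R" "strategy_run k R \<sigma> x0 cs" for x0 cs
  proof (cases cs)
    case Nil then show ?thesis by simp
  next
    case (Cons c cs')
    define j where "j = length cs - 1"
    have j: "j < length cs" "Suc j = length cs" using Cons j_def by auto
    have "\<sigma> (take (Suc j) (walk_sites R x0 cs)) = Some (cs ! j)"
      using that(2) j unfolding strategy_run_def by blast
    hence "length (take (Suc j) (walk_sites R x0 cs)) \<le> length (W x0)"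
      unfolding \<sigma>_def ws_hd_take by (auto split: if_splits)
    hence "length cs \<le> length (W x0)" using j by simp
    also have "\<dots> \<le> M" unfolding M_def using fin that(1) by auto
    finally show ?thesis .
  qed
  have "solves_exploration S k R \<sigma>"
    unfolding solves_exploration_def using run W by blast
  thus ?thesis using bound by blast
qed


locale cons =
  fixes p k :: nat and m :: "nat \<Rightarrow> nat"
  assumes p3: "3 \<le> p" and k3: "3 \<le> k" and kp: "k - 1 \<le> p"
    and m0: "1 \<le> m 0" "m 0 \<le> p"
    and mc: "\<And>c. 1 \<le> c \<Longrightarrow> c < k \<Longrightarrow> 2 \<le> m c \<and> m c \<le> p - 1"
begin

definition base :: "nat \<Rightarrow> nat" where "base c = (\<Sum>i<c. m i)"
definition off :: "nat \<Rightarrow> nat \<Rightarrow> nat" where "off c t = (t + p - c mod p) mod p"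
definition kap :: "nat \<Rightarrow> nat" where "kap c = (if c = 1 then p - 2 else p - 1)"
definition idx :: "nat \<Rightarrow> nat \<Rightarrow> nat" where
  "idx c q = (if q = kap c then 0 else if c = 1 \<and> q = p - 1 then min (p-2) (m c - 1) else min q (m c - 1))"
definition pos :: "nat \<Rightarrow> nat \<Rightarrow> nat" where
  "pos c t = (if c = 0 \<or> off c t = 0 then min (t mod p) (m 0 - 1) else base c + idx c (off c t))"
definition R :: "nat \<Rightarrow> nat list" where "R c = map (\<lambda>t. pos c t) [0..<p]"

lemma p0: "0 < p" using p3 by simp

lemma cmp: "c mod p \<le> p" using p0 by (simp add: less_imp_le)

lemma off_alt: "off c t = (t + (p - c mod p)) mod p"
  unfolding off_def using cmp[of c] by simp

lemma off_mod: "off c (t mod p) = off c t"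
  unfolding off_alt by (simp add: mod_add_left_eq)

lemma pos_mod: "pos c (t mod p) = pos c t"
  unfolding pos_def off_mod by simp

lemma pvpos: "pv_pos R c t = pos c t"
  unfolding pv_pos_def R_def using p0 by (simp add: pos_mod)

lemma off_lt: "off c t < p" unfolding off_def using p0 by simp

lemma off0_iff: "off c t = 0 \<longleftrightarrow> t mod p = c mod p"
proof -
  have "c mod p < p" using p0 by simp
  have "(t + p - c mod p) mod p = (t + (p - c mod p)) mod p" using \<open>c mod p < p\<close> by simp
  also have "\<dots> = 0 \<longleftrightarrow> t mod p = c mod p"
  proof -
    have "(t + (p - c mod p)) mod p = 0 \<longleftrightarrow> (t mod p + (p - c mod p)) mod p = 0"
      by (simp add: mod_add_left_eq)
    also have "\<dots> \<longleftrightarrow> t mod p = c mod p"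
    proof -
      have a: "t mod p < p" using p0 by simp
      show ?thesis
      proof (cases "t mod p \<ge> c mod p")
        case True
        hence e: "t mod p + (p - c mod p) = p + (t mod p - c mod p)" using \<open>c mod p < p\<close> by simp
        have "(p + (t mod p - c mod p)) mod p = t mod p - c mod p" using a by simp
        hence "(t mod p + (p - c mod p)) mod p = t mod p - c mod p" using e by simp
        thus ?thesis using True by simp
      next
        case False
        hence "t mod p + (p - c mod p) < p" "0 < t mod p + (p - c mod p)" using \<open>c mod p < p\<close> by auto
        thus ?thesis using False by simp
      qed
    qed
    finally show ?thesis .
  qed
  finally show ?thesis unfolding off_def .
qed

lemma off_Suc: "off c (Suc t) = (if off c t = p - 1 then 0 else Suc (off c t))"
proof -
  have "off c (Suc t) = (Suc (t + p - c mod p)) mod p"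
  proof -
    have "c mod p < p" using p0 by simp
    hence "c mod p \<le> t + p" by linarith
    hence e1: "Suc (t + p) - c mod p = Suc (t + p - c mod p)" by (rule Suc_diff_le)
    have "off c (Suc t) = (Suc (t + p) - c mod p) mod p" unfolding off_def by simp
    thus ?thesis unfolding e1 .
  qed
  also have "\<dots> = Suc (off c t) mod p" unfolding off_def by (rule mod_Suc_eq[symmetric])
  finally have e: "off c (Suc t) = Suc (off c t) mod p" .
  show ?thesis
  proof (cases "off c t = p - 1")
    case True
    hence "Suc (off c t) = p" using p0 by simp
    thus ?thesis using e True by simp
  next
    case False
    hence "Suc (off c t) < p" using off_lt[of c t] by linarith
    thus ?thesis using e False by simp
  qed
qed

lemma base_mono: "c < c' \<Longrightarrow> base c + m c \<le> base c'"
proof (induction c')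
  case 0 thus ?case by simp
next
  case (Suc c')
  thus ?case unfolding base_def by (auto simp: less_Suc_eq)
qed

lemma base_mono2: "c \<le> c' \<Longrightarrow> base c \<le> base c'"
  using base_mono[of c c'] by (cases "c = c'") auto

lemma base_ge: "1 \<le> c \<Longrightarrow> m 0 \<le> base c"
  using base_mono2[of 1 c] by (simp add: base_def)

lemma idx_lt: "1 \<le> c \<Longrightarrow> c < k \<Longrightarrow> idx c q < m c"
  using mc[of c] unfolding idx_def by auto

lemma idx0: "1 \<le> c \<Longrightarrow> c < k \<Longrightarrow> 1 \<le> q \<Longrightarrow> idx c q = 0 \<longleftrightarrow> q = kap c"
  using mc[of c] p3 unfolding idx_def kap_def by auto

lemma pos_hub: "c = 0 \<or> off c t = 0 \<Longrightarrow> pos c t = min (t mod p) (m 0 - 1) \<and> pos c t < m 0"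
  unfolding pos_def using m0 by auto

lemma pos_priv: "1 \<le> c \<Longrightarrow> c < k \<Longrightarrow> off c t \<noteq> 0 \<Longrightarrow>
    pos c t = base c + idx c (off c t) \<and> base c \<le> pos c t \<and> pos c t < base c + m c \<and> m 0 \<le> pos c t"
  using idx_lt[of c "off c t"] base_ge[of c] unfolding pos_def by auto

lemma interval_unique:
  assumes "c < k" "c' < k" "base c \<le> x" "x < base c + m c" "base c' \<le> x" "x < base c' + m c'"
  shows "c = c'"
proof (rule ccontr)
  assume "c \<noteq> c'"
  then consider "c < c'" | "c' < c" by linarith
  thus False
  proof cases
    case 1 thus False using base_mono[OF 1] assms by linarith
  next
    case 2 thus False using base_mono[OF 2] assms by linarith
  qed
qed

lemma same_site:
  assumes "c < k" "c' < k" "pos c t = pos c' t" "m 0 \<le> pos c t"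
  shows "c = c' \<and> 1 \<le> c \<and> off c t \<noteq> 0"
proof -
  have c: "1 \<le> c \<and> off c t \<noteq> 0" using assms pos_hub[of c t] by (cases "c = 0 \<or> off c t = 0") auto
  have c': "1 \<le> c' \<and> off c' t \<noteq> 0" using assms pos_hub[of c' t] by (cases "c' = 0 \<or> off c' t = 0") auto
  have a: "base c \<le> pos c t" "pos c t < base c + m c" using pos_priv[of c t] c assms(1) by auto
  have b: "base c' \<le> pos c t" "pos c t < base c' + m c'" using pos_priv[of c' t] c' assms(2,3) by auto
  have "c = c'" by (rule interval_unique[OF assms(1,2) a b])
  thus ?thesis using c by simp
qed

lemma phase_distinct:
  assumes "1 \<le> c" "c < k" "1 \<le> c'" "c' < k" "off c t = 0" "off c' t = 0"
  shows "c = c'"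
proof -
  have "c mod p = c' mod p" using assms off0_iff by simp
  moreover have "c \<le> p" "c' \<le> p" using assms kp by auto
  moreover have "c mod p = (if c = p then 0 else c)" "c' mod p = (if c' = p then 0 else c')"
    using \<open>c \<le> p\<close> \<open>c' \<le> p\<close> by auto
  ultimately show ?thesis using assms(1,3)
    by (cases "c = p"; cases "c' = p") simp_all
qed

end



context cons begin

definition sb :: "nat \<Rightarrow> nat" where "sb c = p + 2*p*c + c mod p"

definition ch :: "nat \<Rightarrow> nat \<Rightarrow> nat" where
  "ch c0 t = (if t < c0 mod p then c0
     else if p \<le> t \<and> 1 \<le> (t-p) div (2*p) \<and> (t-p) div (2*p) mod p \<le> (t-p) mod (2*p)
             \<and> (t-p) mod (2*p) < (t-p) div (2*p) mod p + p then (t-p) div (2*p) else 0)"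

lemma block_iff:
  assumes "1 \<le> c"
  shows "(p \<le> t \<and> 1 \<le> (t-p) div (2*p) \<and> (t-p) div (2*p) mod p \<le> (t-p) mod (2*p)
             \<and> (t-p) mod (2*p) < (t-p) div (2*p) mod p + p \<and> (t-p) div (2*p) = c)
         \<longleftrightarrow> (sb c \<le> t \<and> t < sb c + p)" (is "?L \<longleftrightarrow> ?R")
proof
  assume L: ?L
  define u where "u = t - p"
  have e: "u = u div (2*p) * (2*p) + u mod (2*p)" by (rule div_mult_mod_eq[symmetric])
  have c: "u div (2*p) = c" using L unfolding u_def by simp
  have u: "u = 2*p*c + u mod (2*p)" using e unfolding c by (simp add: mult.commute)
  have t: "t = p + u" using L unfolding u_def by simp
  have "c mod p \<le> u mod (2*p)" "u mod (2*p) < c mod p + p" using L unfolding u_def by auto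
  thus ?R unfolding sb_def using u t by linarith
next
  assume R: ?R
  define u where "u = t - p"
  have cp: "c mod p < p" using p0 by simp
  obtain d where d: "u = 2*p*c + c mod p + d" "d < p"
    using R unfolding sb_def u_def
    by (metis add.assoc add_diff_cancel_left' add_less_cancel_left le_Suc_ex le_add1)
  have "c mod p + d < 2*p" using cp d by linarith
  moreover have u2: "u = (c mod p + d) + c * (2*p)" using d(1) by simp
  ultimately have dv: "u div (2*p) = c" "u mod (2*p) = c mod p + d" using p0
    by (simp_all only: u2 div_mult_self1 mod_mult_self1) simp_all
  have "p \<le> t" using R unfolding sb_def by linarith
  thus ?L using dv d assms unfolding u_def by auto
qed

lemma sb_mod: "sb c mod p = c mod p" "(sb c + p) mod p = c mod p"
proof -
  have "sb c = c mod p + (1 + 2*c) * p" unfolding sb_def by (simp add: algebra_simps)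
  hence "sb c mod p = c mod p mod p" by (simp only: mod_mult_self1)
  thus "sb c mod p = c mod p" by simp
  have "sb c + p = c mod p + (2 + 2*c) * p" unfolding sb_def by (simp add: algebra_simps)
  hence "(sb c + p) mod p = c mod p mod p" by (simp only: mod_mult_self1)
  thus "(sb c + p) mod p = c mod p" by simp
qed

lemma sb_ge: "p \<le> sb c" unfolding sb_def by simp

lemma ch_eq:
  assumes "1 \<le> c"
  shows "ch c0 t = c \<longleftrightarrow> (c = c0 \<and> t < c mod p) \<or> (sb c \<le> t \<and> t < sb c + p)"
proof (cases "t < c0 mod p")
  case True
  have "t < p" using True p0 by (meson mod_less_divisor order.strict_trans)
  hence "\<not> (sb c \<le> t)" using sb_ge[of c] by linarith
  thus ?thesis using True unfolding ch_def by auto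
next
  case False
  have "ch c0 t = c \<longleftrightarrow> (p \<le> t \<and> 1 \<le> (t-p) div (2*p) \<and> (t-p) div (2*p) mod p \<le> (t-p) mod (2*p)
             \<and> (t-p) mod (2*p) < (t-p) div (2*p) mod p + p \<and> (t-p) div (2*p) = c)"
    unfolding ch_def using False assms by auto
  also have "\<dots> \<longleftrightarrow> (sb c \<le> t \<and> t < sb c + p)" by (rule block_iff[OF assms])
  finally show ?thesis using False by auto
qed

definition hubby :: "nat \<Rightarrow> nat \<Rightarrow> bool" where "hubby c t \<longleftrightarrow> c = 0 \<or> off c t = 0"

lemma switch1:
  assumes "ch c0 t = c" "ch c0 (Suc t) \<noteq> c"
  shows "hubby c (Suc t)"
proof (cases "c = 0")
  case True thus ?thesis by (simp add: hubby_def)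
next
  case False
  hence c1: "1 \<le> c" by simp
  have A: "(c = c0 \<and> t < c mod p) \<or> (sb c \<le> t \<and> t < sb c + p)" using ch_eq[OF c1] assms(1) by blast
  have B: "\<not> ((c = c0 \<and> Suc t < c mod p) \<or> (sb c \<le> Suc t \<and> Suc t < sb c + p))"
    using ch_eq[OF c1, of c0 "Suc t"] assms(2) by blast
  have "Suc t mod p = c mod p"
  proof (cases "c = c0 \<and> t < c mod p")
    case True
    hence "Suc t = c mod p" using B by auto
    thus ?thesis by simp
  next
    case False
    hence "Suc t = sb c + p" using A B by auto
    thus ?thesis using sb_mod by simp
  qed
  thus ?thesis unfolding hubby_def using off0_iff by simp
qed

lemma switch2:
  assumes "ch c0 (Suc t) = c" "ch c0 t \<noteq> c"
  shows "hubby c (Suc t)"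
proof (cases "c = 0")
  case True thus ?thesis by (simp add: hubby_def)
next
  case False
  hence c1: "1 \<le> c" by simp
  have A: "(c = c0 \<and> Suc t < c mod p) \<or> (sb c \<le> Suc t \<and> Suc t < sb c + p)"
    using ch_eq[OF c1, of c0 "Suc t"] assms(1) by blast
  have B: "\<not> ((c = c0 \<and> t < c mod p) \<or> (sb c \<le> t \<and> t < sb c + p))"
    using ch_eq[OF c1, of c0 t] assms(2) by blast
  have "Suc t = sb c" using A B by auto
  hence "Suc t mod p = c mod p" using sb_mod by simp
  thus ?thesis unfolding hubby_def using off0_iff by simp
qed

lemma ch_step: "pos (ch c0 (Suc t)) (Suc t) = pos (ch c0 t) (Suc t)"
proof (cases "ch c0 (Suc t) = ch c0 t")
  case True thus ?thesis by simp
next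
  case False
  have "hubby (ch c0 t) (Suc t)" "hubby (ch c0 (Suc t)) (Suc t)"
    using switch1[OF refl, of c0 t] switch2[OF refl, of c0 t] False by auto
  thus ?thesis using pos_hub unfolding hubby_def by metis
qed

end



context cons begin

definition Lw :: nat where "Lw = p + 2*p*k"
definition wk :: "nat \<Rightarrow> nat list" where "wk c0 = map (ch c0) [0..<Lw]"

lemma ch_lt: assumes "t < Lw" "c0 < k" shows "ch c0 t < k"
proof -
  have "(t - p) div (2*p) < k" if "p \<le> t"
  proof -
    have "t - p < k * (2*p)" using assms(1) that unfolding Lw_def by (simp add: algebra_simps)
    thus ?thesis by (rule less_mult_imp_div_less)
  qed
  thus ?thesis unfolding ch_def using assms(2) by auto
qed

lemma cover_split:
  "x < base K \<Longrightarrow> 1 \<le> K \<Longrightarrow> x < m 0 \<or> (\<exists>c. 1 \<le> c \<and> c < K \<and> base c \<le> x \<and> x < base c + m c)"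
proof (induction K)
  case 0 thus ?case by simp
next
  case (Suc K)
  show ?case
  proof (cases "K = 0")
    case True thus ?thesis using Suc.prems by (simp add: base_def)
  next
    case False
    show ?thesis
    proof (cases "x < base K")
      case True
      thus ?thesis using Suc.IH False by force
    next
      case F: False
      have "x < base K + m K" using Suc.prems(1) by (simp add: base_def)
      thus ?thesis using F False by (intro disjI2 exI[of _ K]) auto
    qed
  qed
qed

lemma idx_surj:
  assumes "1 \<le> c" "c < k" "z < m c"
  shows "\<exists>q. 1 \<le> q \<and> q < p \<and> idx c q = z"
proof -
  have mcb: "2 \<le> m c" "m c \<le> p - 1" using mc assms by auto
  show ?thesis
  proof (cases "z = 0")
    case True
    thus ?thesis using p3 by (intro exI[of _ "kap c"]) (auto simp: idx_def kap_def)
  next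
    case z: False
    show ?thesis
    proof (cases "c = 1")
      case False
      thus ?thesis using z mcb assms p3 by (intro exI[of _ z]) (auto simp: idx_def kap_def)
    next
      case c1: True
      show ?thesis
      proof (cases "z \<le> p - 3")
        case True
        thus ?thesis using z mcb assms p3 c1 by (intro exI[of _ z]) (auto simp: idx_def kap_def)
      next
        case False
        hence "z = p - 2" using mcb assms by linarith
        thus ?thesis using z mcb assms p3 c1 by (intro exI[of _ "p - 1"]) (auto simp: idx_def kap_def)
      qed
    qed
  qed
qed

lemma off_sb: "q < p \<Longrightarrow> off c (sb c + q) = q"
proof -
  assume q: "q < p"
  have "sb c + q + (p - c mod p) = q + (2 + 2*c) * p"
    unfolding sb_def using cmp[of c] by (simp add: algebra_simps)
  hence "off c (sb c + q) = (q + (2 + 2*c) * p) mod p" unfolding off_alt by (simp only:)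
  also have "\<dots> = q mod p" by (simp only: mod_mult_self1)
  finally show ?thesis using q by simp
qed

lemma ws_set: "i < length cs \<Longrightarrow> pv_pos Rr (cs ! i) (Suc i) \<in> set (walk_sites Rr x0 cs)"
  by (metis ws_Suc ws_len nth_mem Suc_mono)

lemma feas:
  assumes c0: "c0 < k"
  shows "realizable_walk k R (pv_pos R c0 0) (wk c0) \<and> concrete_cover {..<base k} R (pv_pos R c0 0) (wk c0)"
proof
  have len: "length (wk c0) = Lw" by (simp add: wk_def)
  have nth: "wk c0 ! i = ch c0 i" if "i < Lw" for i using that by (simp add: wk_def)
  show "realizable_walk k R (pv_pos R c0 0) (wk c0)"
    unfolding realizable_walk_def
  proof (intro allI impI conjI)
    fix j assume j: "j < length (wk c0)"
    show "wk c0 ! j < k" using ch_lt[OF _ c0] j len nth by simp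
    show "pv_pos R (wk c0 ! j) j = walk_sites R (pv_pos R c0 0) (wk c0) ! j"
    proof (cases j)
      case 0
      have "pos (ch c0 0) 0 = pos c0 0"
      proof (cases "0 < c0 mod p")
        case True thus ?thesis by (simp add: ch_def)
      next
        case False
        hence "ch c0 0 = 0" using p0 by (simp add: ch_def)
        moreover have "off c0 0 = 0" using False off0_iff by simp
        ultimately show ?thesis by (simp add: pos_def)
      qed
      thus ?thesis using 0 j len nth by (simp add: pvpos walk_sites_def)
    next
      case (Suc i)
      have "walk_sites R (pv_pos R c0 0) (wk c0) ! Suc i = pos (ch c0 i) (Suc i)"
        using ws_Suc[of i "wk c0"] Suc j len nth by (simp add: pvpos)
      thus ?thesis using Suc j len nth ch_step by (simp add: pvpos)
    qed
  qed
  show "concrete_cover {..<base k} R (pv_pos R c0 0) (wk c0)"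
    unfolding concrete_cover_def
  proof
    fix x assume "x \<in> {..<base k}"
    hence x: "x < base k" by simp
    have visit: "pos (ch c0 i) (Suc i) \<in> set (walk_sites R (pv_pos R c0 0) (wk c0))" if "i < Lw" for i
      using ws_set[of i "wk c0" R "pv_pos R c0 0"] that len nth by (simp add: pvpos)
    from cover_split[OF x] k3 consider "x < m 0" | c where "1 \<le> c" "c < k" "base c \<le> x" "x < base c + m c"
      by force
    thus "x \<in> set (walk_sites R (pv_pos R c0 0) (wk c0))"
    proof cases
      case 1
      define i where "i = 2*p + x - 1"
      have xp: "x < p" using 1 m0 by linarith
      have "c0 mod p < p" using p0 by simp
      hence ip: "\<not> i < c0 mod p" "p \<le> i" using p0 xp unfolding i_def by linarith+
      have "(i - p) div (2*p) = 0" using xp p0 unfolding i_def by simp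
      hence "ch c0 i = 0" using ip unfolding ch_def by simp
      moreover have "Suc i = x + 2 * p" using p0 unfolding i_def by simp
      moreover have "(x + 2*p) mod p = x" using xp by simp
      ultimately have "pos (ch c0 i) (Suc i) = x" using 1 by (simp add: pos_def)
      moreover have "i < Lw"
      proof -
        have "2*p*3 \<le> 2*p*k" using k3 by simp
        thus ?thesis using xp unfolding i_def Lw_def by linarith
      qed
      ultimately show ?thesis using visit by metis
    next
      case 2
      obtain q where q: "1 \<le> q" "q < p" "idx c q = x - base c"
      proof -
        have "x - base c < m c" using 2 by linarith
        thus ?thesis using idx_surj[OF 2(1,2), of "x - base c"] that by blast
      qed
      define i where "i = sb c + q - 1"
      have si: "Suc i = sb c + q" using q unfolding i_def by simp
      have "ch c0 i = c" using ch_eq[OF 2(1), of c0 i] q unfolding i_def by auto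
      moreover have "pos c (sb c + q) = x"
        using off_sb[OF q(2), of c] q 2 unfolding pos_def by simp
      moreover have "i < Lw"
      proof -
        have "c mod p < p" using p0 by simp
        hence "sb c + q \<le> p + 2*p*c + (p - 1) + (p - 1)" unfolding sb_def using q by linarith
        also have "\<dots> < p + 2*p*(c+1)" using p0 by simp
        also have "\<dots> \<le> p + 2*p*k"
        proof -
          have "c + 1 \<le> k" using 2 by simp
          hence "2*p*(c+1) \<le> 2*p*k" by (rule mult_le_mono2)
          thus ?thesis by simp
        qed
        finally show ?thesis using si unfolding Lw_def by simp
      qed
      ultimately show ?thesis using visit si by metis
    qed
  qed
qed

end



context cons begin

lemma kap_b: "1 \<le> kap c" "kap c \<le> p - 1" "kap c < p" using p3 unfolding kap_def by auto

lemma key_pos: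
  assumes "c' < k" "1 \<le> c" "c < k"
  shows "pos c' t = base c \<longleftrightarrow> (c' = c \<and> off c t = kap c)"
proof
  assume h: "pos c' t = base c"
  have mc2: "2 \<le> m c" using mc assms(2,3) by auto
  have "m 0 \<le> pos c' t" using h base_ge[OF assms(2)] by simp
  hence nh: "1 \<le> c' \<and> off c' t \<noteq> 0" using pos_hub[of c' t] by (cases "c' = 0 \<or> off c' t = 0") auto
  have r: "base c' \<le> pos c' t" "pos c' t < base c' + m c'" using pos_priv[of c' t] nh assms(1) by auto
  have "c' = c" using interval_unique[OF assms(1) assms(3) r] h mc2 by simp
  hence "idx c (off c t) = 0" using h pos_priv[of c t] nh assms by simp
  hence "off c t = kap c" using idx0[OF assms(2,3)] nh \<open>c' = c\<close> by simp
  thus "c' = c \<and> off c t = kap c" using \<open>c' = c\<close> by simp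
next
  assume h: "c' = c \<and> off c t = kap c"
  hence "off c t \<noteq> 0" using kap_b[of c] by simp
  thus "pos c' t = base c" using h assms(2) by (simp add: pos_def idx_def)
qed

lemma Dnew:
  assumes "c' < k"
  shows "{c. 1 \<le> c \<and> c < k \<and> pos c' t = base c} = (if 1 \<le> c' \<and> off c' t = kap c' then {c'} else {})"
  using key_pos[OF assms] assms by auto

definition h0 :: "nat \<Rightarrow> nat set \<Rightarrow> nat" where
  "h0 j D = (if 1 \<in> D then (if \<exists>c\<in>D. off c j = 0 then 0 else 1)
             else (if (\<exists>c\<in>D. off c j = 0) \<or> (card D = 0 \<and> off 1 j = 0) then 1 else 2))"
definition hdep :: "nat \<Rightarrow> nat set \<Rightarrow> nat" where
  "hdep c D = (if 1 \<in> D then 1 else if c = 1 \<and> card D = 0 then 1 else 2)"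
definition hd :: "nat \<Rightarrow> nat set \<Rightarrow> nat" where
  "hd c D = (if c = 1 then (if 2 \<le> card D then 2 else 1) else (if 1 \<in> D then 1 else 2))"

definition INV :: "nat \<Rightarrow> nat \<Rightarrow> nat set \<Rightarrow> bool" where
  "INV l j D \<longleftrightarrow> (if hubby l j then card D * (p+1) + h0 j D \<le> j
     else (l \<notin> D \<longrightarrow> card D * (p+1) + hdep l D + off l j \<le> j) \<and>
          (l \<in> D \<longrightarrow> card D * (p+1) + hd l D + max (off l j) (kap l) \<le> j + p + 1))"

lemma h0_step: "h0 (Suc j) D \<le> Suc (h0 j D)"
  unfolding h0_def by auto

lemma h0_le2: "h0 j D \<le> 2" unfolding h0_def by auto

lemma hdep_ge1: "1 \<le> hdep c D" unfolding hdep_def by auto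
lemma hd_le2: "hd c D \<le> 2" unfolding hd_def by auto

lemma h0_hdep:
  assumes "D \<subseteq> {1..<k}" "1 \<le> c'" "c' < k" "c' \<notin> D" "off c' j = 0"
  shows "hdep c' D \<le> h0 j D"
proof -
  have nw: "\<not> (\<exists>c\<in>D. off c j = 0)"
  proof
    assume "\<exists>c\<in>D. off c j = 0"
    then obtain c where c: "c \<in> D" "off c j = 0" by blast
    have "1 \<le> c" "c < k" using c(1) assms(1) by auto
    hence "c = c'" using phase_distinct[OF _ _ assms(2,3) c(2) assms(5)] by simp
    thus False using c assms(4) by simp
  qed
  show ?thesis
  proof (cases "1 \<in> D")
    case True thus ?thesis using nw by (simp add: h0_def hdep_def)
  next
    case False
    show ?thesis
    proof (cases "c' = 1 \<and> card D = 0")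
      case True thus ?thesis using False by (simp add: h0_def hdep_def)
    next
      case F2: False
      have "\<not> (card D = 0 \<and> off 1 j = 0)"
      proof
        assume a: "card D = 0 \<and> off 1 j = 0"
        hence "c' = 1" using phase_distinct[of 1 c' j] assms k3 by auto
        thus False using F2 a by simp
      qed
      thus ?thesis using False nw F2 by (simp add: h0_def hdep_def)
    qed
  qed
qed

lemma hd_hdep:
  assumes "finite D" "c' \<notin> D"
  shows "hd c' (insert c' D) \<le> hdep c' D"
  using assms unfolding hd_def hdep_def by auto

lemma h0_ret:
  assumes "l \<in> D" "off l t = 0"
  shows "h0 t D + 1 \<le> hd l D"
  using assms unfolding h0_def hd_def by auto

lemma enter:
  assumes DS: "D \<subseteq> {1..<k}" and c1: "1 \<le> c'" "c' < k" and nd: "c' \<notin> D"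
    and o: "off c' (Suc j) \<noteq> 0"
    and pre: "card D * (p+1) + hdep c' D + off c' (Suc j) \<le> Suc j"
    and D': "D' = D \<union> {c. 1 \<le> c \<and> c < k \<and> pos c' (Suc j) = base c}"
  shows "INV c' (Suc j) D'"
proof -
  have fin: "finite D" using DS finite_subset by blast
  have nh: "\<not> hubby c' (Suc j)" using c1 o by (simp add: hubby_def)
  show ?thesis
  proof (cases "off c' (Suc j) = kap c'")
    case True
    hence D'e: "D' = insert c' D" using D' Dnew[OF c1(2), of "Suc j"] c1 by auto
    have cd: "card D' = Suc (card D)" using D'e fin nd by simp
    have "hd c' D' \<le> hdep c' D" using hd_hdep[OF fin nd] D'e by simp
    thus ?thesis using nh cd D'e True pre unfolding INV_def by simp
  next
    case False
    hence "D' = D" using D' Dnew[OF c1(2), of "Suc j"] by auto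
    thus ?thesis using nh nd pre unfolding INV_def by simp
  qed
qed

lemma INV_step:
  assumes DS: "D \<subseteq> {1..<k}" and l: "l < k" and c': "c' < k"
    and eq: "pos c' j = pos l j" and inv: "INV l j D"
    and D': "D' = D \<union> {c. 1 \<le> c \<and> c < k \<and> pos c' (Suc j) = base c}"
  shows "INV c' (Suc j) D'"
proof (cases "hubby l j")
  case hl: True
  have i0: "card D * (p+1) + h0 j D \<le> j" using inv hl unfolding INV_def by simp
  have "pos l j < m 0" using pos_hub hl unfolding hubby_def by blast
  hence hc: "hubby c' j" using eq pos_priv[of c' j] c' unfolding hubby_def by (cases "c' = 0") auto
  show ?thesis
  proof (cases "c' = 0")
    case True
    have "D' = D" using D' Dnew[OF c', of "Suc j"] True by auto
    moreover have "hubby c' (Suc j)" using True by (simp add: hubby_def)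
    ultimately show ?thesis using i0 h0_step[of j D] True unfolding INV_def by simp
  next
    case False
    hence c1: "1 \<le> c'" and oc: "off c' j = 0" using hc by (auto simp: hubby_def)
    have o1: "off c' (Suc j) = 1" using oc off_Suc[of c' j] p3 by simp
    show ?thesis
    proof (cases "c' \<in> D")
      case True
      have D'e: "D' = D" using D' Dnew[OF c', of "Suc j"] True by auto
      have nh: "\<not> hubby c' (Suc j)" using c1 o1 by (simp add: hubby_def)
      have "hd c' D + max 1 (kap c') \<le> p + 1" using hd_le2[of c' D] kap_b[of c'] by simp
      thus ?thesis using nh D'e True i0 o1 unfolding INV_def by simp
    next
      case False
      have "hdep c' D \<le> h0 j D" using h0_hdep[OF DS c1 c' False oc] .
      hence "card D * (p+1) + hdep c' D + off c' (Suc j) \<le> Suc j" using i0 o1 by simp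
      thus ?thesis using enter[OF DS c1 c' False _ _ D'] o1 by simp
    qed
  qed
next
  case nl: False
  hence l1: "1 \<le> l" and ol: "off l j \<noteq> 0" by (auto simp: hubby_def)
  have "m 0 \<le> pos l j" using pos_priv[OF l1 l ol] by simp
  hence "c' = l" using same_site[OF c' l] eq by simp
  show ?thesis
  proof (cases "off l j = p - 1")
    case True
    have o0: "off l (Suc j) = 0" using True off_Suc[of l j] by simp
    have D'e: "D' = D" using D' Dnew[OF c', of "Suc j"] o0 kap_b[of c'] \<open>c' = l\<close> by auto
    have hs: "hubby c' (Suc j)" using o0 \<open>c' = l\<close> by (simp add: hubby_def)
    show ?thesis
    proof (cases "l \<in> D")
      case False
      hence "card D * (p+1) + hdep l D + (p - 1) \<le> j" using inv nl True unfolding INV_def by simp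
      hence "card D * (p+1) + 2 \<le> Suc j" using hdep_ge1[of l D] p3 by linarith
      thus ?thesis using hs D'e h0_le2[of "Suc j" D] unfolding INV_def by simp
    next
      case True
      have "max (off l j) (kap l) = p - 1" using \<open>off l j = p - 1\<close> kap_b[of l] by simp
      hence "card D * (p+1) + hd l D + (p - 1) \<le> j + p + 1" using inv nl True unfolding INV_def by simp
      moreover have "h0 (Suc j) D + 1 \<le> hd l D" using h0_ret[OF True o0] .
      ultimately have "card D * (p+1) + h0 (Suc j) D \<le> Suc j" using p3 by linarith
      thus ?thesis using hs D'e \<open>c' = l\<close> unfolding INV_def by simp
    qed
  next
    case False
    have os: "off l (Suc j) = Suc (off l j)" using False off_Suc[of l j] by simp
    show ?thesis
    proof (cases "l \<in> D")
      case False
      hence "card D * (p+1) + hdep l D + off l j \<le> j" using inv nl unfolding INV_def by simp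
      hence "card D * (p+1) + hdep l D + off l (Suc j) \<le> Suc j" using os by simp
      thus ?thesis using enter[OF DS l1 l False _ _] D' os \<open>c' = l\<close> by simp
    next
      case True
      have D'e: "D' = D" using D' Dnew[OF c', of "Suc j"] True \<open>c' = l\<close> by auto
      have nh: "\<not> hubby l (Suc j)" using os l1 by (simp add: hubby_def)
      have "card D * (p+1) + hd l D + max (off l j) (kap l) \<le> j + p + 1" using inv nl True unfolding INV_def by simp
      moreover have "max (off l (Suc j)) (kap l) \<le> Suc (max (off l j) (kap l))" using os by simp
      ultimately have "card D * (p+1) + hd l D + max (off l (Suc j)) (kap l) \<le> Suc j + p + 1" by linarith
      thus ?thesis using nh D'e True \<open>c' = l\<close> unfolding INV_def by simp
    qed
  qed
qed

end



context cons begin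

lemma lower:
  assumes rw: "realizable_walk k R (pv_pos R 1 0) cs"
    and cv: "concrete_cover {..<base k} R (pv_pos R 1 0) cs"
  shows "(k-2)*(p+1) + p \<le> length cs"
proof -
  define x0 where "x0 = pv_pos R 1 0"
  define L where "L = length cs"
  define w where "w j = walk_sites R x0 cs ! j" for j
  have w0: "w 0 = pos 1 0" unfolding w_def x0_def by (simp add: pvpos)
  have wS: "w (Suc j) = pos (cs!j) (Suc j)" if "j < L" for j
    using that unfolding w_def L_def by (simp add: ws_Suc pvpos)
  have rl: "cs!j < k \<and> pos (cs!j) j = w j" if "j < L" for j
    using rw that unfolding realizable_walk_def w_def L_def x0_def by (simp add: pvpos)
  define Dn where "Dn j = {c. 1 \<le> c \<and> c < k \<and> (\<exists>i\<le>j. w i = base c)}" for j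
  have DS: "Dn j \<subseteq> {1..<k}" for j unfolding Dn_def by auto
  have DSuc: "Dn (Suc j) = Dn j \<union> {c. 1 \<le> c \<and> c < k \<and> w (Suc j) = base c}" for j
    unfolding Dn_def by (auto simp: le_Suc_eq)
  have p1: "1 mod p = 1" using p3 by simp
  have off10: "off 1 0 = p - 1" unfolding off_alt p1 using p3 by simp
  have off11: "off 1 1 = 0" using off0_iff by simp
  have k1: "1 < k" using k3 by simp
  have w0nb: "w 0 \<noteq> base c" if "1 \<le> c" "c < k" for c
    using key_pos[OF k1 that, of 0] w0 off10 p3 unfolding kap_def by auto
  have pm: "m 0 \<le> pos 1 0" using pos_priv[of 1 0] off10 p3 k1 by simp
  have L1: "1 \<le> L"
  proof (rule ccontr)
    assume "\<not> 1 \<le> L"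
    hence "cs = []" unfolding L_def by (cases cs) auto
    hence "{..<base k} \<subseteq> {x0}" using cv unfolding concrete_cover_def x0_def by (simp add: walk_sites_def)
    moreover have "2 \<le> base k"
    proof -
      have "base 2 \<le> base k" using base_mono2 k3 by simp
      moreover have "base 2 = m 0 + m 1" by (simp add: base_def numeral_2_eq_2)
      moreover have "2 \<le> m 1" using mc[of 1] k3 by simp
      ultimately show ?thesis by simp
    qed
    ultimately have "(0::nat) \<in> {x0}" "(1::nat) \<in> {x0}" by (auto simp: subset_eq)
    thus False by simp
  qed
  have cs0: "cs!0 = 1"
  proof -
    have "pos (cs!0) 0 = pos 1 0" using rl[of 0] L1 w0 by simp
    thus ?thesis using same_site[of "cs!0" 1 0] rl[of 0] L1 k1 pm by simp
  qed
  have w1: "w 1 = pos 1 1" using wS[of 0] L1 cs0 by simp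
  have D1: "Dn 1 = {}"
  proof -
    have "w 1 < m 0" using w1 pos_hub[of 1 1] off11 by simp
    hence "w 1 \<noteq> base c" if "1 \<le> c" for c using base_ge[OF that] by simp
    hence "w i \<noteq> base c" if "1 \<le> c" "c < k" "i \<le> 1" for c i
      using w0nb[OF that(1,2)] that by (cases i) auto
    thus ?thesis unfolding Dn_def by blast
  qed
  have inv1: "INV (cs!0) 1 (Dn 1)"
    unfolding INV_def D1 cs0 using off11 by (simp add: hubby_def h0_def)
  have invall: "INV (cs!(j-1)) j (Dn j)" if "1 \<le> j" "j \<le> L" for j
    using that
  proof (induction j rule: dec_induct)
    case base thus ?case using inv1 by simp
  next
    case (step j)
    have jl: "j < L" using step by simp
    have eq: "pos (cs!j) j = pos (cs!(j-1)) j"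
    proof -
      have "w j = pos (cs!(j-1)) j" using wS[of "j-1"] step by simp
      thus ?thesis using rl[OF jl] by simp
    qed
    have D': "Dn (Suc j) = Dn j \<union> {c. 1 \<le> c \<and> c < k \<and> pos (cs!j) (Suc j) = base c}"
      using DSuc[of j] wS[OF jl] by simp
    have "INV (cs!j) (Suc j) (Dn (Suc j))"
      using INV_step[OF DS _ _ eq _ D'] rl[OF jl] rl[of "j-1"] step by simp
    thus ?case by simp
  qed
  have DL: "Dn L = {1..<k}"
  proof
    show "Dn L \<subseteq> {1..<k}" by (rule DS)
    show "{1..<k} \<subseteq> Dn L"
    proof
      fix c assume c: "c \<in> {1..<k}"
      have "base c + m c \<le> base k" using base_mono c by simp
      moreover have "2 \<le> m c" using mc c by auto
      ultimately have "base c \<in> set (walk_sites R x0 cs)" using cv unfolding concrete_cover_def x0_def by auto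
      then obtain i where "i < Suc L" "w i = base c" unfolding w_def L_def by (auto simp: in_set_conv_nth)
      hence "i \<le> L \<and> w i = base c" by simp
      thus "c \<in> Dn L" using c unfolding Dn_def by auto
    qed
  qed
  have cardD: "card (Dn L) = k - 1" using DL by simp
  have IL: "INV (cs!(L-1)) L (Dn L)" using invall[OF L1 order.refl] .
  have lk: "cs!(L-1) < k" using rl[of "L-1"] L1 by simp
  have e: "(k-1)*(p+1) = (k-2)*(p+1) + (p+1)"
  proof -
    have "k - 1 = Suc (k-2)" using k3 by simp
    thus ?thesis by simp
  qed
  show ?thesis
  proof (cases "hubby (cs!(L-1)) L")
    case True
    hence "(k-1)*(p+1) \<le> L" using IL cardD unfolding INV_def by simp
    thus ?thesis using e unfolding L_def by simp
  next
    case False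
    define l where "l = cs!(L-1)"
    have l1: "1 \<le> l" using False unfolding l_def by (auto simp: hubby_def)
    have lD: "l \<in> Dn L" using DL l1 lk unfolding l_def by simp
    have "(k-1)*(p+1) + hd l (Dn L) + max (off l L) (kap l) \<le> L + p + 1"
      using IL False lD cardD unfolding INV_def l_def by simp
    moreover have "p \<le> hd l (Dn L) + max (off l L) (kap l)"
    proof (cases "l = 1")
      case True
      have "2 \<le> card (Dn L)" using cardD k3 by simp
      thus ?thesis using True p3 by (simp add: hd_def kap_def)
    next
      case False
      have "1 \<in> Dn L" using DL k3 by simp
      thus ?thesis using False p3 by (simp add: hd_def kap_def)
    qed
    ultimately show ?thesis using e unfolding L_def by linarith
  qed
qed

end



context cons begin
lemma pos_lt: "c < k \<Longrightarrow> pos c t < base k"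
proof -
  assume c: "c < k"
  have mk: "m 0 \<le> base k" using base_ge k3 by simp
  show ?thesis
  proof (cases "c = 0 \<or> off c t = 0")
    case True thus ?thesis using pos_hub[of c t] mk by simp
  next
    case False
    hence "pos c t < base c + m c" using pos_priv[of c t] c by simp
    moreover have "base c + m c \<le> base k" using base_mono c by simp
    ultimately show ?thesis by simp
  qed
qed
end

lemma sum_if0: "(\<Sum>i<Suc K. if i = 0 then (a::nat) else b) = a + K * b"
  by (induction K) auto

theorem mainTheorem3:
  fixes n k p :: nat
  assumes "n \<ge> 9" and "3 \<le> k" and "3 * k \<le> n"
    and "p \<ge> k - 1" and "real p \<ge> of_int \<lceil>real n / real (k - 1)\<rceil>"
  shows "\<exists>(S :: nat set) (R :: nat \<Rightarrow> nat list).
           pv_wf S k R \<and> card S = n \<and> pv_homogeneous k R \<and> pv_period k R = p \<and>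
           pv_feasible S k R \<and>
           pv_M S k R \<ge> (k - 2) * (p + 1) + n div (k - 1)"
proof -
  have k1pos: "0 < real (k - 1)" using assms(2) by simp
  have "real n / real (k - 1) \<le> real p"
    using assms(5) le_of_int_ceiling order_trans by blast
  hence "real n \<le> real p * real (k - 1)" using k1pos by (simp add: divide_le_eq)
  hence npk: "n \<le> p * (k - 1)" by (metis of_nat_le_iff of_nat_mult)
  have p3: "3 \<le> p"
  proof (rule ccontr)
    assume "\<not> 3 \<le> p"
    hence "p * (k - 1) \<le> 2 * (k - 1)" by simp
    moreover have "2 * (k - 1) < 3 * k" using assms(2) by simp
    ultimately show False using npk assms(3) by linarith
  qed
  have ndiv: "n div (k - 1) \<le> p"
  proof -
    have "n div (k - 1) \<le> (p * (k - 1)) div (k - 1)" using npk by (rule div_le_mono)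
    also have "\<dots> = p" using assms(2) by simp
    finally show ?thesis .
  qed
  define lo where "lo i = (if i = 0 then 1 else (2::nat))" for i :: nat
  define hi where "hi i = (if i = 0 then p else p - 1)" for i :: nat
  obtain k' where k': "k = Suc k'" using assms(2) by (cases k) auto
  have slo: "(\<Sum>i<k. lo i) = 1 + k' * 2" unfolding lo_def k' by (rule sum_if0)
  have shi: "(\<Sum>i<k. hi i) = p + k' * (p - 1)" unfolding hi_def k' by (rule sum_if0)
  have "(\<Sum>i<k. lo i) \<le> n" using slo assms(3) k' by simp
  moreover have "n \<le> (\<Sum>i<k. hi i)"
  proof -
    have "k' \<le> p" using assms(4) k' by simp
    have "p * k' \<le> p + k' * (p - 1)"
    proof -
      have "k' * (p - 1) + k' = k' * p" using p3 by (cases p) (auto simp: algebra_simps)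
      thus ?thesis using \<open>k' \<le> p\<close> by (simp add: mult.commute)
    qed
    thus ?thesis using npk shi k' by simp
  qed
  moreover have "\<forall>i<k. lo i \<le> hi i" using p3 unfolding lo_def hi_def by auto
  ultimately obtain m where m: "\<forall>i<k. lo i \<le> m i \<and> m i \<le> hi i" "(\<Sum>i<k. m i) = n"
    using exists_dist by blast
  interpret C: cons p k m
  proof
    show "3 \<le> p" by fact
    show "3 \<le> k" by fact
    show "k - 1 \<le> p" by fact
    have "0 < k" using assms(2) by simp
    hence "lo 0 \<le> m 0 \<and> m 0 \<le> hi 0" using m(1) by blast
    thus "1 \<le> m 0" "m 0 \<le> p" unfolding lo_def hi_def by auto
    show "\<And>c. 1 \<le> c \<Longrightarrow> c < k \<Longrightarrow> 2 \<le> m c \<and> m c \<le> p - 1" using m(1) unfolding lo_def hi_def by auto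
  qed
  have bk: "C.base k = n" using m(2) by (simp add: C.base_def)
  define S where "S = {..<n}"
  have wf: "pv_wf S k C.R"
    unfolding pv_wf_def S_def
  proof (intro conjI allI impI)
    show "finite {..<n}" by simp
    fix c assume c: "c < k"
    show "C.R c \<noteq> []" using C.p0 by (simp add: C.R_def)
    show "set (C.R c) \<subseteq> {..<n}" using C.pos_lt[OF c] bk by (auto simp: C.R_def)
  qed
  have hom: "pv_homogeneous k C.R" by (simp add: pv_homogeneous_def C.R_def)
  have per: "pv_period k C.R = p"
  proof -
    have "(0::nat) \<in> {..<k}" using assms(2) by simp
    hence "(\<lambda>c. length (C.R c)) ` {..<k} = {p}" by (auto simp: C.R_def image_iff)
    thus ?thesis by (simp add: pv_period_def)
  qed
  have fe: "pv_feasible S k C.R"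
    unfolding pv_feasible_def S_def using C.feas bk by auto
  have fin: "finite (pv_start k C.R)"
  proof -
    have "pv_start k C.R = (\<lambda>c. pv_pos C.R c 0) ` {..<k}" by (auto simp: pv_start_def)
    thus ?thesis by simp
  qed
  have ex: "\<forall>x0\<in>pv_start k C.R. \<exists>cs. realizable_walk k C.R x0 cs \<and> concrete_cover S C.R x0 cs"
    using C.feas bk unfolding pv_start_def S_def by auto
  define P where "P mm = (\<exists>\<sigma>. solves_exploration S k C.R \<sigma> \<and>
      (\<forall>x0 \<in> pv_start k C.R. \<forall>cs. strategy_run k C.R \<sigma> x0 cs \<longrightarrow> length cs \<le> mm))" for mm
  have "\<exists>mm. P mm" using exists_strategy[OF fin ex] unfolding P_def by blast
  hence "P (Least P)" by (rule LeastI_ex)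
  moreover have "pv_M S k C.R = Least P" unfolding pv_M_def P_def by simp
  ultimately obtain \<sigma> where sol: "solves_exploration S k C.R \<sigma>"
    and bd: "\<forall>x0 \<in> pv_start k C.R. \<forall>cs. strategy_run k C.R \<sigma> x0 cs \<longrightarrow> length cs \<le> pv_M S k C.R"
    unfolding P_def by auto
  have x0s: "pv_pos C.R 1 0 \<in> pv_start k C.R" using assms(2) unfolding pv_start_def by auto
  then obtain cs where run: "strategy_run k C.R \<sigma> (pv_pos C.R 1 0) cs"
    and cov: "concrete_cover S C.R (pv_pos C.R 1 0) cs"
    using sol unfolding solves_exploration_def by blast
  have "(k-2)*(p+1) + p \<le> length cs"
    using C.lower run cov bk unfolding strategy_run_def S_def by simp
  also have "\<dots> \<le> pv_M S k C.R" using bd x0s run by blast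
  finally have "(k - 2) * (p + 1) + n div (k - 1) \<le> pv_M S k C.R" using ndiv by linarith
  moreover have "card S = n" by (simp add: S_def)
  ultimately show ?thesis using wf hom per fe by blast
qed


end
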